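(* For every graph $G$, $\psi(G)\le\gamma_M(G)+\gamma(G)$.
   Context: All graphs are finite, simple, undirected and connected, with at least 2 vertices; $d(u,v)$ is the shortest-path distance. A set $S\subseteq V(G)$ is resolving if for all distinct $x,y$ there is $u\in S$ with $d(u,x)\ne d(u,y)$. $S$ is dominating if every vertex not in $S$ has a neighbor in $S$; $\gamma(G)$ is its minimum size. An MLD-set is a set both resolving and dominating; $\gamma_M(G)$ is its minimum size. A doubly resolving set is a set $S$ such that for every pair of distinct vertices $x,y$ there are $u,v\in S$ with $d(u,x)-d(u,y)\ne d(v,x)-d(v,y)$; $\psi(G)$ is its minimum size. *)

theory Defs
  imports Main
begin

fun walk :: "('a \<Rightarrow> 'a \<Rightarrow> bool) \<Rightarrow> 'a list \<Rightarrow> bool" where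
  "walk E [] = False"
| "walk E [x] = True"
| "walk E (x # y # xs) = (E x y \<and> walk E (y # xs))"

definition conn_graph :: "'a set \<Rightarrow> ('a \<Rightarrow> 'a \<Rightarrow> bool) \<Rightarrow> bool" where
  "conn_graph V E \<longleftrightarrow> finite V \<and> card V \<ge> 2
     \<and> (\<forall>x y. E x y \<longrightarrow> x \<in> V \<and> y \<in> V)
     \<and> (\<forall>x y. E x y \<longrightarrow> E y x)
     \<and> (\<forall>x. \<not> E x x)
     \<and> (\<forall>x\<in>V. \<forall>y\<in>V. \<exists>p. walk E p \<and> hd p = x \<and> last p = y)"

definition gdist :: "('a \<Rightarrow> 'a \<Rightarrow> bool) \<Rightarrow> 'a \<Rightarrow> 'a \<Rightarrow> nat" where
  "gdist E x y = (LEAST n. \<exists>p. walk E p \<and> hd p = x \<and> last p = y \<and> length p = Suc n)"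

definition resolving :: "'a set \<Rightarrow> ('a \<Rightarrow> 'a \<Rightarrow> bool) \<Rightarrow> 'a set \<Rightarrow> bool" where
  "resolving V E S \<longleftrightarrow> S \<subseteq> V \<and>
     (\<forall>x\<in>V. \<forall>y\<in>V. x \<noteq> y \<longrightarrow> (\<exists>u\<in>S. gdist E u x \<noteq> gdist E u y))"

definition dominating :: "'a set \<Rightarrow> ('a \<Rightarrow> 'a \<Rightarrow> bool) \<Rightarrow> 'a set \<Rightarrow> bool" where
  "dominating V E S \<longleftrightarrow> S \<subseteq> V \<and> (\<forall>x\<in>V - S. \<exists>u\<in>S. E x u)"

definition doubly_resolving :: "'a set \<Rightarrow> ('a \<Rightarrow> 'a \<Rightarrow> bool) \<Rightarrow> 'a set \<Rightarrow> bool" where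
  "doubly_resolving V E S \<longleftrightarrow> S \<subseteq> V \<and>
     (\<forall>x\<in>V. \<forall>y\<in>V. x \<noteq> y \<longrightarrow> (\<exists>u\<in>S. \<exists>v\<in>S.
        int (gdist E u x) - int (gdist E u y) \<noteq> int (gdist E v x) - int (gdist E v y)))"

definition domination_number :: "'a set \<Rightarrow> ('a \<Rightarrow> 'a \<Rightarrow> bool) \<Rightarrow> nat" where
  "domination_number V E = (LEAST k. \<exists>S. dominating V E S \<and> card S = k)"

definition mld_number :: "'a set \<Rightarrow> ('a \<Rightarrow> 'a \<Rightarrow> bool) \<Rightarrow> nat" where
  "mld_number V E = (LEAST k. \<exists>S. resolving V E S \<and> dominating V E S \<and> card S = k)"

definition doubly_resolving_number :: "'a set \<Rightarrow> ('a \<Rightarrow> 'a \<Rightarrow> bool) \<Rightarrow> nat" where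
  "doubly_resolving_number V E = (LEAST k. \<exists>S. doubly_resolving V E S \<and> card S = k)"

end

theory Submission
  imports Defs
begin

lemma gd_self: "gdist E u u = 0"
proof -
  have "\<exists>p. walk E p \<and> hd p = u \<and> last p = u \<and> length p = Suc 0"
    by (rule exI[of _ "[u]"]) simp
  then have "gdist E u u \<le> 0" unfolding gdist_def by (rule Least_le)
  thus ?thesis by simp
qed

lemma gd_zero:
  assumes "conn_graph V E" "u \<in> V" "v \<in> V" "gdist E u v = 0"
  shows "u = v"
proof -
  obtain p where p: "walk E p" "hd p = u" "last p = v"
    using assms(1-3) unfolding conn_graph_def by blast
  then have "\<exists>n p. walk E p \<and> hd p = u \<and> last p = v \<and> length p = Suc n"
    by (metis Suc_pred length_greater_0_conv walk.simps(1))
  from LeastI_ex[OF this] assms(4) obtain q where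
    "walk E q" "hd q = u" "last q = v" "length q = Suc 0"
    unfolding gdist_def by auto
  then show ?thesis by (cases q) auto
qed

lemma gd_adj: "E u v \<Longrightarrow> gdist E u v \<le> 1"
proof -
  assume "E u v"
  then have "\<exists>p. walk E p \<and> hd p = u \<and> last p = v \<and> length p = Suc 1"
    by (intro exI[of _ "[u,v]"]) simp
  thus ?thesis unfolding gdist_def by (rule Least_le)
qed

lemma key:
  assumes G: "conn_graph V E"
    and S: "resolving V E S" "dominating V E S"
    and D: "dominating V E D"
    and f: "\<And>y. f y = (if \<exists>x. x \<in> V \<and> x \<noteq> y \<and> (\<forall>u\<in>S \<union> D. int (gdist E u x) = int (gdist E u y) + 1)
                 then SOME x. x \<in> V \<and> x \<noteq> y \<and> (\<forall>u\<in>S \<union> D. int (gdist E u x) = int (gdist E u y) + 1) else y)"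
    and T: "T = S \<union> D \<union> f ` (S \<inter> D)"
    and xy: "x \<in> V" "y \<in> V" "x \<noteq> y"
    and c: "c > 0" "\<forall>u\<in>T. int (gdist E u x) = int (gdist E u y) + c"
  shows False
proof -
  have xT: "x \<notin> T"
  proof
    assume "x \<in> T" then have "int (gdist E x x) = int (gdist E x y) + c" using c by blast
    with c gd_self[of E x] show False by simp
  qed
  have symE: "\<And>a b. E a b \<Longrightarrow> E b a" using G unfolding conn_graph_def by blast
  have EV: "\<And>a b. E a b \<Longrightarrow> a \<in> V \<and> b \<in> V" using G unfolding conn_graph_def by blast
  have c1: "c = 1 \<and> (\<forall>s\<in>T. E x s \<longrightarrow> s = y)"
  proof -
    have "\<And>s. s \<in> T \<Longrightarrow> E x s \<Longrightarrow> c = 1 \<and> s = y"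
    proof -
      fix s assume s: "s \<in> T" "E x s"
      have "gdist E s x \<le> 1" by (rule gd_adj, rule symE, rule s(2))
      moreover have "int (gdist E s x) = int (gdist E s y) + c" using c s by blast
      ultimately have "gdist E s y = 0" "c = 1" using c by auto
      moreover have "s \<in> V" using EV[OF s(2)] by simp
      ultimately show "c = 1 \<and> s = y" using gd_zero[OF G _ xy(2), of s] by simp
    qed
    moreover obtain s where "s \<in> S" "E x s" using S(2) xT T xy(1) unfolding dominating_def by blast
    ultimately show ?thesis using T by blast
  qed
  obtain s where s: "s \<in> S" "E x s" using S(2) xT T xy(1) unfolding dominating_def by blast
  obtain d where d: "d \<in> D" "E x d" using D xT T xy(1) unfolding dominating_def by blast
  have yS: "y \<in> S" using s c1 T by blast
  have yD: "y \<in> D" using d c1 T by blast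
  let ?P = "\<lambda>x. x \<in> V \<and> x \<noteq> y \<and> (\<forall>u\<in>S \<union> D. int (gdist E u x) = int (gdist E u y) + 1)"
  have Px: "?P x" using xy c c1 T by auto
  then have fy: "f y = (SOME x. ?P x)" using f[of y] by auto
  have Pf: "?P (f y)" unfolding fy by (rule someI[of ?P x], fact)
  have fT: "f y \<in> T" using T yS yD by blast
  have "f y \<noteq> x" using fT xT by blast
  moreover have R: "\<forall>x\<in>V. \<forall>y\<in>V. x \<noteq> y \<longrightarrow> (\<exists>u\<in>S. gdist E u x \<noteq> gdist E u y)"
    using S(1) unfolding resolving_def by blast
  moreover have "f y \<in> V" using Pf by blast
  ultimately have "\<exists>u\<in>S. gdist E u x \<noteq> gdist E u (f y)"
    using xy(1) by metis
  then obtain u where u: "u \<in> S" "gdist E u x \<noteq> gdist E u (f y)" by blast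
  moreover have "int (gdist E u x) = int (gdist E u y) + 1" using Px u(1) by blast
  moreover have "int (gdist E u (f y)) = int (gdist E u y) + 1" using Pf u(1) by blast
  ultimately show False by simp
qed

theorem theorem12:
  assumes "conn_graph V E"
  shows "doubly_resolving_number V E \<le> mld_number V E + domination_number V E"
proof -
  note G = assms
  have finV: "finite V" using G unfolding conn_graph_def by blast
  have Vres: "resolving V E V"
    unfolding resolving_def
  proof (intro conjI ballI impI)
    fix x y assume xy: "x \<in> V" "y \<in> V" "x \<noteq> y"
    then show "\<exists>u\<in>V. gdist E u x \<noteq> gdist E u y"
    proof -
      have "gdist E x x = 0" by (rule gd_self)
      moreover have "gdist E x y \<noteq> 0" using gd_zero[OF G, of x y] xy by blast
      ultimately show ?thesis using \<open>x \<in> V\<close> by force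
    qed
  qed simp
  have Vdom: "dominating V E V" unfolding dominating_def by simp
  obtain S where S: "resolving V E S" "dominating V E S" "card S = mld_number V E"
    using LeastI_ex[of "\<lambda>k. \<exists>S. resolving V E S \<and> dominating V E S \<and> card S = k"] Vres Vdom
    unfolding mld_number_def by blast
  obtain D where D: "dominating V E D" "card D = domination_number V E"
    using LeastI_ex[of "\<lambda>k. \<exists>S. dominating V E S \<and> card S = k"] Vdom
    unfolding domination_number_def by blast
  define f where "f y = (if \<exists>x. x \<in> V \<and> x \<noteq> y \<and> (\<forall>u\<in>S \<union> D. int (gdist E u x) = int (gdist E u y) + 1)
                 then SOME x. x \<in> V \<and> x \<noteq> y \<and> (\<forall>u\<in>S \<union> D. int (gdist E u x) = int (gdist E u y) + 1) else y)" for y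
  define T where "T = S \<union> D \<union> f ` (S \<inter> D)"
  have SV: "S \<subseteq> V" using S unfolding resolving_def by blast
  have DV: "D \<subseteq> V" using D unfolding dominating_def by blast
  have fV: "f y \<in> V" if "y \<in> V" for y
  proof (cases "\<exists>x. x \<in> V \<and> x \<noteq> y \<and> (\<forall>u\<in>S \<union> D. int (gdist E u x) = int (gdist E u y) + 1)")
    case True
    then show ?thesis unfolding f_def using someI_ex[OF True] by auto
  next
    case False then show ?thesis unfolding f_def using that by auto
  qed
  have TV: "T \<subseteq> V" unfolding T_def using SV DV fV by blast
  have finS: "finite S" "finite D" using SV DV finV finite_subset by auto
  have "card T \<le> card (S \<union> D) + card (f ` (S \<inter> D))"
    unfolding T_def by (rule card_Un_le)
  also have "\<dots> \<le> card (S \<union> D) + card (S \<inter> D)" using card_image_le finS by auto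
  also have "\<dots> = card S + card D" using card_Un_Int[OF finS] by simp
  finally have cardT: "card T \<le> card S + card D" .
  have dr: "doubly_resolving V E T"
    unfolding doubly_resolving_def
  proof (intro conjI ballI impI)
    show "T \<subseteq> V" by (rule TV)
    fix x y assume xy: "x \<in> V" "y \<in> V" "x \<noteq> y"
    show "\<exists>u\<in>T. \<exists>v\<in>T. int (gdist E u x) - int (gdist E u y) \<noteq> int (gdist E v x) - int (gdist E v y)"
    proof (rule ccontr)
      assume H: "\<not> ?thesis"
      obtain u0 where u0: "u0 \<in> S" "gdist E u0 x \<noteq> gdist E u0 y"
        using S(1) xy unfolding resolving_def by blast
      have u0T: "u0 \<in> T" using u0 T_def by blast
      define c where "c = int (gdist E u0 x) - int (gdist E u0 y)"
      have all: "\<forall>u\<in>T. int (gdist E u x) = int (gdist E u y) + c"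
      proof
        fix u assume "u \<in> T"
        then have "int (gdist E u x) - int (gdist E u y) = int (gdist E u0 x) - int (gdist E u0 y)"
          using H u0T by blast
        then show "int (gdist E u x) = int (gdist E u y) + c" unfolding c_def by linarith
      qed
      have "c \<noteq> 0" using u0 unfolding c_def by simp
      then consider "c > 0" | "c < 0" by linarith
      then show False
      proof cases
        case 1
        show False by (rule key[OF G S(1,2) D(1) f_def T_def xy 1 all])
      next
        case 2
        have all': "\<forall>u\<in>T. int (gdist E u y) = int (gdist E u x) + (-c)" using all by auto
        show False by (rule key[OF G S(1,2) D(1) f_def T_def xy(2,1) _ _ all']) (use xy 2 in auto)
      qed
    qed
  qed
  have "doubly_resolving_number V E \<le> card T"
    unfolding doubly_resolving_number_def using dr by (intro Least_le) blast
  then show ?thesis using cardT S(3) D(2) by simp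
qed

end
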